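(* Let $(G',\Sigma')$ be a signed graph on vertex set $\{v_1,\dots,v_k\}$, and for each $i\in\{1,\dots,k\}$ let $(G_i,\Sigma_i)$ be a signed graph, the sets $V(G_i)$ pairwise disjoint. Let $(G,\Sigma)$ be the signed graph obtained from $(G',\Sigma')$ by substituting $v_i$ with $(G_i,\Sigma_i)$ for every $i$. For each $i$, let $n_i=|V(G_i)|$, $m_i=\sum_{v_j\in N_{G'}(v_i)}n_j$, and let $\{\lambda_{i,1},\dots,\lambda_{i,n_i}\}$ be the spectrum (multiset of eigenvalues) of $L(G_i,\Sigma_i)$. Let $M$ be the $k\times k$ matrix with $M_{i,i}=\lambda_{i,n_i}+m_i$ and, for $i\neq j$, $M_{i,j}=n_j$ if $v_iv_j\in\Sigma'$, $M_{i,j}=-n_j$ if $v_iv_j\in E(G')\setminus\Sigma'$, and $M_{i,j}=0$ otherwise; let $\{\mu_1,\dots,\mu_k\}$ be the spectrum of $M$. If for every $i$ the all-ones vector $\mathbf{1}_{n_i}$ is a $\lambda_{i,n_i}$-eigenvector of $L(G_i,\Sigma_i)$, then the spectrum of $L(G,\Sigma)$ is the multiset \[\{\mu_i:i\in[k]\}\cup\bigcup_{i=1}^k\{\lambda_{i,j}+m_i:j\in[n_i-1]\}.\]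
   Context: All graphs are finite and simple. A signed graph is a pair $(G,\Sigma)$ with $\Sigma\subseteq E(G)$; edges in $\Sigma$ are odd, others even. The signed Laplacian is $L(G,\Sigma)=D(G)-A(G,\Sigma)$, $D(G)$ the diagonal degree matrix, $A(G,\Sigma)$ having $(i,j)$-entry $1$ for an even edge, $-1$ for an odd edge, $0$ otherwise. For signed graphs $(G,\Sigma)$, $(H,\Gamma)$ with disjoint vertex sets and $v\in V(G)$, substituting $v$ with $(H,\Gamma)$ yields the signed graph obtained from the disjoint union of $(G-v,\Sigma\setminus\delta(v))$ and $(H,\Gamma)$ (where $\delta(v)$ is the set of edges at $v$) by adding all edges $uv'$ with $u\in V(H)$, $v'\in N_G(v)$, where $uv'$ is odd exactly when $vv'$ is odd in $(G,\Sigma)$. Substituting every $v_i$ of $G'$ with $(G_i,\Sigma_i)$ thus gives the signed graph on $\bigcup_iV(G_i)$ containing each $(G_i,\Sigma_i)$, together with, for each edge $v_iv_j$ of $G'$, all edges between $V(G_i)$ and $V(G_j)$, each having the parity of $v_iv_j$ in $(G',\Sigma')$, and no other edges. $[m]=\{1,\dots,m\}$. *)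

theory Defs
  imports "Jordan_Normal_Form.Char_Poly"
begin

text \<open>A signed graph on a finite vertex set of naturals: vertices, edges (2-element sets),
  and the set of odd edges.\<close>
record sgraph =
  sV :: "nat set"
  sE :: "nat set set"
  sSig :: "nat set set"

definition wf_sgraph :: "sgraph \<Rightarrow> bool" where
  "wf_sgraph G \<longleftrightarrow> finite (sV G) \<and>
     sE G \<subseteq> {{u, w} | u w. u \<in> sV G \<and> w \<in> sV G \<and> u \<noteq> w} \<and>
     sSig G \<subseteq> sE G"

definition sdeg :: "sgraph \<Rightarrow> nat \<Rightarrow> nat" where
  "sdeg G v = card {e \<in> sE G. v \<in> e}"

definition sadj :: "sgraph \<Rightarrow> nat \<Rightarrow> nat \<Rightarrow> real" where
  "sadj G u w = (if {u, w} \<in> sE G then (if {u, w} \<in> sSig G then -1 else 1) else 0)"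

text \<open>Vertices are enumerated in increasing order; the spectrum does not depend on this.\<close>
definition vlist :: "sgraph \<Rightarrow> nat list" where
  "vlist G = sorted_list_of_set (sV G)"

definition slap :: "sgraph \<Rightarrow> real mat" where
  "slap G = mat (card (sV G)) (card (sV G))
     (\<lambda>(a, b). (if a = b then real (sdeg G (vlist G ! a)) else 0)
               - sadj G (vlist G ! a) (vlist G ! b))"

definition spec :: "real mat \<Rightarrow> complex multiset" where
  "spec A = proots (char_poly (map_mat complex_of_real A))"

text \<open>Substitution of every vertex i (i < k) of G' (vertex set {0..<k}) by Gs i.\<close>
definition subst_all :: "sgraph \<Rightarrow> nat \<Rightarrow> (nat \<Rightarrow> sgraph) \<Rightarrow> sgraph" where
  "subst_all G' k Gs =
    \<lparr> sV = (\<Union>i<k. sV (Gs i)),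
      sE = (\<Union>i<k. sE (Gs i)) \<union>
           {{u, w} | i j u w. i < k \<and> j < k \<and> {i, j} \<in> sE G' \<and> u \<in> sV (Gs i) \<and> w \<in> sV (Gs j)},
      sSig = (\<Union>i<k. sSig (Gs i)) \<union>
           {{u, w} | i j u w. i < k \<and> j < k \<and> {i, j} \<in> sSig G' \<and> u \<in> sV (Gs i) \<and> w \<in> sV (Gs j)} \<rparr>"

definition nbsize :: "sgraph \<Rightarrow> nat \<Rightarrow> (nat \<Rightarrow> sgraph) \<Rightarrow> nat \<Rightarrow> nat" where
  "nbsize G' k Gs i = (\<Sum>j\<in>{j. j < k \<and> {i, j} \<in> sE G'}. card (sV (Gs j)))"

text \<open>The k x k quotient matrix M; lam i is the eigenvalue lambda_{i,n_i}.\<close>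
definition quotM :: "sgraph \<Rightarrow> nat \<Rightarrow> (nat \<Rightarrow> sgraph) \<Rightarrow> (nat \<Rightarrow> complex) \<Rightarrow> complex mat" where
  "quotM G' k Gs lam = mat k k (\<lambda>(i, j).
     if i = j then lam i + of_nat (nbsize G' k Gs i)
     else if {i, j} \<in> sSig G' then of_nat (card (sV (Gs j)))
     else if {i, j} \<in> sE G' then - of_nat (card (sV (Gs j)))
     else 0)"

definition cspec :: "complex mat \<Rightarrow> complex multiset" where
  "cspec A = proots (char_poly A)"

end

theory Submission
  imports Defs
begin

definition detL :: "nat set \<Rightarrow> (nat \<Rightarrow> nat \<Rightarrow> 'a::comm_ring_1) \<Rightarrow> 'a" where
  "detL I f = (\<Sum>p\<in>{p. p permutes I}. of_int (sign p) * (\<Prod>u\<in>I. f u (p u)))"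

definition vm :: "nat set \<Rightarrow> (nat \<Rightarrow> nat \<Rightarrow> 'a) \<Rightarrow> 'a mat" where
  "vm I f = mat (card I) (card I)
     (\<lambda>(a, b). f (sorted_list_of_set I ! a) (sorted_list_of_set I ! b))"

definition cj :: "(nat \<Rightarrow> nat) \<Rightarrow> nat set \<Rightarrow> (nat \<Rightarrow> nat) \<Rightarrow> nat \<Rightarrow> nat" where
  "cj h J q = (\<lambda>x. if x \<in> h ` J then h (q (inv_into J h x)) else x)"

lemma cj_permutes:
  assumes q: "q permutes J" and h: "inj_on h J"
  shows "cj h J q permutes (h ` J)"
proof (rule bij_imp_permutes)
  have b1: "bij_betw (inv_into J h) (h ` J) J" using h by (simp add: bij_betw_inv_into inj_on_imp_bij_betw)
  have b2: "bij_betw q J J" using q by (rule permutes_imp_bij)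
  have b3: "bij_betw h J (h ` J)" using h by (simp add: inj_on_imp_bij_betw)
  have "bij_betw (h \<circ> q \<circ> inv_into J h) (h ` J) (h ` J)"
    using b1 b2 b3 by (meson bij_betw_trans)
  then show "bij_betw (cj h J q) (h ` J) (h ` J)"
    by (rule bij_betw_cong[THEN iffD1, rotated]) (auto simp: cj_def)
  show "\<And>x. x \<notin> h ` J \<Longrightarrow> cj h J q x = x" by (simp add: cj_def)
qed

lemma cj_id: "inj_on h J \<Longrightarrow> cj h J id = id"
  by (auto simp: cj_def fun_eq_iff f_inv_into_f)

lemma cj_comp_transpose:
  assumes h: "inj_on h J" and a: "a \<in> J" and b: "b \<in> J" and p: "p permutes J"
  shows "cj h J (Transposition.transpose a b \<circ> p) = Transposition.transpose (h a) (h b) \<circ> cj h J p"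
proof
  fix x
  show "cj h J (Transposition.transpose a b \<circ> p) x = (Transposition.transpose (h a) (h b) \<circ> cj h J p) x"
  proof (cases "x \<in> h ` J")
    case True
    then have y: "p (inv_into J h x) \<in> J" using p by (simp add: inv_into_into permutes_in_image)
    have "h (Transposition.transpose a b (p (inv_into J h x))) = Transposition.transpose (h a) (h b) (h (p (inv_into J h x)))"
      using y a b h by (auto simp: Transposition.transpose_def inj_on_eq_iff)
    then show ?thesis using True by (simp add: cj_def)
  next
    case False
    then show ?thesis using a b by (auto simp: cj_def Transposition.transpose_def)
  qed
qed

lemma sign_cj:
  assumes q: "q permutes J" and fin: "finite J" and h: "inj_on h J"
  shows "sign (cj h J q) = sign q"
  using q fin
proof (induction rule: permutes_induct)
  case id
  have "cj h J (\<lambda>a. a) = id" using cj_id[OF h] by (simp add: id_def)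
  then show ?case by simp
next
  case (swap a b p)
  have pp: "permutation p" using swap fin permutes_imp_permutation by blast
  have pc: "permutation (cj h J p)"
    using cj_permutes[OF \<open>p permutes J\<close> h] fin permutes_imp_permutation by blast
  have hab: "h a \<noteq> h b" using swap h by (auto simp: inj_on_eq_iff)
  have "sign (cj h J (Transposition.transpose a b \<circ> p)) = sign (Transposition.transpose (h a) (h b) \<circ> cj h J p)"
    using cj_comp_transpose[OF h swap(1,2) \<open>p permutes J\<close>] by simp
  also have "\<dots> = sign (Transposition.transpose (h a) (h b)) * sign (cj h J p)"
    by (rule sign_compose[OF permutation_swap_id pc])
  also have "\<dots> = - sign p" using hab swap by (simp add: sign_swap_id)
  also have "\<dots> = sign (Transposition.transpose a b) * sign p" using swap by (simp add: sign_swap_id)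
  also have "\<dots> = sign (Transposition.transpose a b \<circ> p)"
    by (rule sign_compose[OF permutation_swap_id pp, symmetric])
  finally show ?case .
qed

lemma cj_cj:
  assumes q: "q permutes J" and h: "inj_on h J"
  shows "cj (inv_into J h) (h ` J) (cj h J q) = q"
proof
  fix x
  have b3: "bij_betw h J (h ` J)" using h by (simp add: inj_on_imp_bij_betw)
  have im: "inv_into J h ` h ` J = J" using h by simp
  show "cj (inv_into J h) (h ` J) (cj h J q) x = q x"
  proof (cases "x \<in> J")
    case True
    then have "q x \<in> J" using q by (simp add: permutes_in_image)
    then show ?thesis using True h im inv_into_inv_into_eq[OF b3 True]
      by (simp add: cj_def)
  next
    case False
    then show ?thesis using q im by (simp add: cj_def permutes_not_in)
  qed
qed

lemma cj_cong:
  assumes "\<And>a. a \<in> J \<Longrightarrow> g a = h a" and p: "p permutes J"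
  shows "cj g J p = cj h J p"
proof -
  have im: "g ` J = h ` J" using assms(1) by (intro image_cong) auto
  have "\<And>y. inv_into J g y = inv_into J h y"
    unfolding inv_into_def using assms by (metis (no_types, lifting))
  then show ?thesis using im assms
    by (auto simp: cj_def fun_eq_iff inv_into_into p permutes_in_image)
qed

lemma detL_reindex:
  assumes fin: "finite J" and h: "inj_on h J"
  shows "detL (h ` J) f = detL J (\<lambda>a b. f (h a) (h b))"
  unfolding detL_def
proof (rule sum.reindex_bij_witness[symmetric, of _ "cj (inv_into J h) (h ` J)" "cj h J"])
  have hi: "inj_on (inv_into J h) (h ` J)" by (simp add: inj_on_inv_into)
  have hiJ: "inv_into J h ` h ` J = J" using h by simp
  show "\<And>a. a \<in> {p. p permutes J} \<Longrightarrow> cj (inv_into J h) (h ` J) (cj h J a) = a"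
    using cj_cj h by auto
  show "\<And>a. a \<in> {p. p permutes J} \<Longrightarrow> cj h J a \<in> {p. p permutes h ` J}"
    using cj_permutes h by auto
  show "\<And>b. b \<in> {p. p permutes h ` J} \<Longrightarrow> cj h J (cj (inv_into J h) (h ` J) b) = b"
  proof -
    fix b assume "b \<in> {p. p permutes h ` J}"
    then have b: "b permutes h ` J" by simp
    have "cj (inv_into (h ` J) (inv_into J h)) (inv_into J h ` h ` J) (cj (inv_into J h) (h ` J) b) = b"
      by (rule cj_cj[OF b hi])
    moreover have "cj (inv_into (h ` J) (inv_into J h)) (inv_into J h ` h ` J) (cj (inv_into J h) (h ` J) b) = cj h J (cj (inv_into J h) (h ` J) b)"
    proof -
      have pj: "cj (inv_into J h) (h ` J) b permutes J"
        using cj_permutes[OF b hi] hiJ by simp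
      have "\<And>a. a \<in> J \<Longrightarrow> inv_into (h ` J) (inv_into J h) a = h a"
        using h by (simp add: inj_on_imp_bij_betw inv_into_inv_into_eq)
      then show ?thesis using hiJ cj_cong[OF _ pj] by metis
    qed
    ultimately show "cj h J (cj (inv_into J h) (h ` J) b) = b" by simp
  qed
  show "\<And>b. b \<in> {p. p permutes h ` J} \<Longrightarrow> cj (inv_into J h) (h ` J) b \<in> {p. p permutes J}"
    using cj_permutes[OF _ hi] hiJ by fastforce
  show "\<And>a. a \<in> {p. p permutes J} \<Longrightarrow>
         of_int (sign (cj h J a)) * (\<Prod>u\<in>h ` J. f u (cj h J a u)) =
         of_int (sign a) * (\<Prod>u\<in>J. f (h u) (h (a u)))"
  proof -
    fix a assume "a \<in> {p. p permutes J}"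
    then have a: "a permutes J" by simp
    have "(\<Prod>u\<in>h ` J. f u (cj h J a u)) = (\<Prod>u\<in>J. f (h u) (cj h J a (h u)))"
      using h by (simp add: prod.reindex)
    also have "\<dots> = (\<Prod>u\<in>J. f (h u) (h (a u)))"
      using h by (intro prod.cong) (auto simp: cj_def)
    finally show "of_int (sign (cj h J a)) * (\<Prod>u\<in>h ` J. f u (cj h J a u)) =
         of_int (sign a) * (\<Prod>u\<in>J. f (h u) (h (a u)))"
      using sign_cj[OF a fin h] by simp
  qed
qed

lemma detL_cong:
  assumes "\<And>u w. u \<in> I \<Longrightarrow> w \<in> I \<Longrightarrow> f u w = g u w"
  shows "detL I f = detL I g"
  unfolding detL_def
  by (intro sum.cong refl arg_cong2[where f="(*)"] prod.cong) (auto simp: assms permutes_in_image)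

lemma detL_mat: "det (mat n n (\<lambda>(a, b). g a b)) = detL {0..<n} g"
  unfolding det_def detL_def
  by (auto intro!: sum.cong arg_cong2[where f="(*)"] prod.cong simp: permutes_in_image)

lemma det_vm:
  assumes "finite I"
  shows "det (vm I f) = detL I f"
proof -
  let ?xs = "sorted_list_of_set I"
  have b: "bij_betw ((!) ?xs) {0..<card I} I"
    using assms by (intro bij_betw_nth) auto
  have "det (vm I f) = detL {0..<card I} (\<lambda>a b. f (?xs ! a) (?xs ! b))"
    unfolding vm_def by (rule detL_mat)
  also have "\<dots> = detL ((!) ?xs ` {0..<card I}) f"
    by (rule detL_reindex[symmetric]) (use b in \<open>auto simp: bij_betw_def\<close>)
  also have "(!) ?xs ` {0..<card I} = I" using b by (simp add: bij_betw_def)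
  finally show ?thesis .
qed

definition chm :: "(nat \<Rightarrow> nat \<Rightarrow> 'a::comm_ring_1) \<Rightarrow> nat \<Rightarrow> nat \<Rightarrow> 'a poly" where
  "chm g u w = (if u = w then [:0, 1:] else 0) + [: - g u w :]"

lemma sl_facts:
  assumes "finite I"
  shows "distinct (sorted_list_of_set I)" "set (sorted_list_of_set I) = I"
    "length (sorted_list_of_set I) = card I"
  using assms by auto

lemma detL_block:
  fixes f :: "nat \<Rightarrow> nat \<Rightarrow> 'a::idom"
  assumes fin: "finite I" and S: "S \<subseteq> I"
    and z: "\<And>u w. u \<in> I - S \<Longrightarrow> w \<in> S \<Longrightarrow> f u w = 0"
  shows "detL I f = detL S f * detL (I - S) f"
proof -
  let ?s = "card S" and ?t = "card (I - S)"
  let ?ls = "sorted_list_of_set S" and ?lt = "sorted_list_of_set (I - S)"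
  define xs where "xs = ?ls @ ?lt"
  have finS: "finite S" using fin S finite_subset by blast
  have finT: "finite (I - S)" using fin by simp
  have lens: "length ?ls = ?s" "length ?lt = ?t" using finS finT by auto
  have dxs: "distinct xs" unfolding xs_def using finS finT by auto
  have sxs: "set xs = I" unfolding xs_def using finS finT S by auto
  have lxs: "length xs = ?s + ?t" unfolding xs_def using lens by simp
  have b: "bij_betw ((!) xs) {0..<?s + ?t} I"
    using bij_betw_nth[OF dxs _ sxs[symmetric]] lxs by (simp add: atLeast0LessThan)
  have "detL I f = detL ((!) xs ` {0..<?s + ?t}) f" using b by (simp add: bij_betw_def)
  also have "\<dots> = detL {0..<?s + ?t} (\<lambda>a b. f (xs ! a) (xs ! b))"
    by (rule detL_reindex) (use b in \<open>auto simp: bij_betw_def\<close>)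
  also have "\<dots> = det (mat (?s + ?t) (?s + ?t) (\<lambda>(a, b). f (xs ! a) (xs ! b)))"
    by (rule detL_mat[symmetric])
  also have "mat (?s + ?t) (?s + ?t) (\<lambda>(a, b). f (xs ! a) (xs ! b)) =
     four_block_mat (vm S f) (mat ?s ?t (\<lambda>(a, b). f (?ls ! a) (?lt ! b))) (0\<^sub>m ?t ?s) (vm (I - S) f)"
  proof (rule eq_matI)
    fix i j assume i: "i < dim_row (four_block_mat (vm S f) (mat ?s ?t (\<lambda>(a, b). f (?ls ! a) (?lt ! b))) (0\<^sub>m ?t ?s) (vm (I - S) f))"
      and j: "j < dim_col (four_block_mat (vm S f) (mat ?s ?t (\<lambda>(a, b). f (?ls ! a) (?lt ! b))) (0\<^sub>m ?t ?s) (vm (I - S) f))"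
    have i': "i < ?s + ?t" and j': "j < ?s + ?t" using i j by (auto simp: vm_def)
    have xi: "xs ! i = (if i < ?s then ?ls ! i else ?lt ! (i - ?s))" unfolding xs_def
      using lens by (simp add: nth_append)
    have xj: "xs ! j = (if j < ?s then ?ls ! j else ?lt ! (j - ?s))" unfolding xs_def
      using lens by (simp add: nth_append)
    have zz: "f (?lt ! (i - ?s)) (?ls ! j) = 0" if "\<not> i < ?s" "j < ?s"
    proof (rule z)
      show "?lt ! (i - ?s) \<in> I - S" using that i' lens finT
        by (metis add_diff_inverse_nat nat_add_left_cancel_less nth_mem sl_facts(2))
      show "?ls ! j \<in> S" using that lens finS by (metis nth_mem sl_facts(2))
    qed
    show "mat (?s + ?t) (?s + ?t) (\<lambda>(a, b). f (xs ! a) (xs ! b)) $$ (i, j) =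
      four_block_mat (vm S f) (mat ?s ?t (\<lambda>(a, b). f (?ls ! a) (?lt ! b))) (0\<^sub>m ?t ?s) (vm (I - S) f) $$ (i, j)"
      using i' j' xi xj zz by (auto simp: vm_def)
  qed (auto simp: vm_def)
  also have "det (four_block_mat (vm S f) (mat ?s ?t (\<lambda>(a, b). f (?ls ! a) (?lt ! b))) (0\<^sub>m ?t ?s) (vm (I - S) f))
     = det (vm S f) * det (vm (I - S) f)"
    by (rule det_four_block_mat_lower_left_zero) (auto simp: vm_def)
  also have "\<dots> = detL S f * detL (I - S) f" using finS finT by (simp add: det_vm)
  finally show ?thesis .
qed

lemma vm_mult:
  assumes fin: "finite I"
  shows "vm I f * vm I g = vm I (\<lambda>u w. \<Sum>z\<in>I. f u z * g z w)"
proof (rule eq_matI)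
  let ?xs = "sorted_list_of_set I"
  have b: "bij_betw ((!) ?xs) {0..<card I} I"
    using fin by (intro bij_betw_nth) auto
  fix i j assume i: "i < dim_row (vm I (\<lambda>u w. \<Sum>z\<in>I. f u z * g z w))"
    and j: "j < dim_col (vm I (\<lambda>u w. \<Sum>z\<in>I. f u z * g z w))"
  have "(vm I f * vm I g) $$ (i, j) = (\<Sum>c\<in>{0..<card I}. f (?xs ! i) (?xs ! c) * g (?xs ! c) (?xs ! j))"
    using i j by (simp add: vm_def scalar_prod_def)
  also have "\<dots> = (\<Sum>z\<in>I. f (?xs ! i) z * g z (?xs ! j))"
    by (rule sum.reindex_bij_betw[OF b])
  finally show "(vm I f * vm I g) $$ (i, j) = vm I (\<lambda>u w. \<Sum>z\<in>I. f u z * g z w) $$ (i, j)"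
    using i j by (simp add: vm_def)
qed (auto simp: vm_def)

lemma vm_one:
  assumes fin: "finite I"
  shows "vm I (\<lambda>u w. if u = w then 1 else 0) = 1\<^sub>m (card I)"
  using fin by (intro eq_matI) (auto simp: vm_def nth_eq_iff_index_eq)

lemma vm_carrier[simp]: "vm I f \<in> carrier_mat (card I) (card I)"
  by (simp add: vm_def)

lemma char_poly_matrix_vm:
  assumes fin: "finite I"
  shows "char_poly_matrix (vm I g) = vm I (chm g)"
  using fin by (intro eq_matI) (auto simp: vm_def chm_def char_poly_matrix_def nth_eq_iff_index_eq)

lemma char_poly_vm:
  assumes fin: "finite I"
  shows "char_poly (vm I g) = detL I (chm g)"
  unfolding char_poly_def char_poly_matrix_vm[OF fin] det_vm[OF fin] ..

lemma detL_blockdiag: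
  fixes f :: "nat \<Rightarrow> nat \<Rightarrow> 'a::idom" and k :: nat
  assumes fin: "\<And>i. i < k \<Longrightarrow> finite (U i)"
    and disj: "\<And>i j. i < k \<Longrightarrow> j < k \<Longrightarrow> i \<noteq> j \<Longrightarrow> U i \<inter> U j = {}"
    and z: "\<And>i j u w. i < k \<Longrightarrow> j < k \<Longrightarrow> i \<noteq> j \<Longrightarrow> u \<in> U i \<Longrightarrow> w \<in> U j \<Longrightarrow> f u w = 0"
  shows "detL (\<Union>i<k. U i) f = (\<Prod>i<k. detL (U i) f)"
  using assms
proof (induct k)
  case 0
  then show ?case by (simp add: detL_def)
next
  case (Suc k)
  let ?S = "\<Union>i<k. U i"
  have e1: "(\<Union>i<Suc k. U i) = ?S \<union> U k" by (auto simp: lessThan_Suc)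
  have e2: "(?S \<union> U k) - ?S = U k"
  proof -
    have "\<And>i. i < k \<Longrightarrow> U k \<inter> U i = {}" using Suc.prems(2) by simp
    then show ?thesis by blast
  qed
  have "detL (\<Union>i<Suc k. U i) f = detL ?S f * detL ((?S \<union> U k) - ?S) f"
    unfolding e1
  proof (rule detL_block)
    show "finite (?S \<union> U k)" using Suc.prems(1) by auto
    show "?S \<subseteq> ?S \<union> U k" by auto
    fix u w assume u: "u \<in> ?S \<union> U k - ?S" and w: "w \<in> ?S"
    then obtain j where "j < k" "w \<in> U j" by auto
    then show "f u w = 0" using u Suc.prems(3)[of k j u w] by auto
  qed
  also have "detL ?S f = (\<Prod>i<k. detL (U i) f)"
  proof (rule Suc.hyps)
    show "\<And>i. i < k \<Longrightarrow> finite (U i)" using Suc.prems(1) by simp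
    show "\<And>i j. i < k \<Longrightarrow> j < k \<Longrightarrow> i \<noteq> j \<Longrightarrow> U i \<inter> U j = {}" using Suc.prems(2) by simp
    show "\<And>i j u w. i < k \<Longrightarrow> j < k \<Longrightarrow> i \<noteq> j \<Longrightarrow> u \<in> U i \<Longrightarrow> w \<in> U j \<Longrightarrow> f u w = 0"
      using Suc.prems(3) by (metis less_Suc_eq)
  qed
  finally show ?case unfolding e2 by (simp add: lessThan_Suc mult.commute)
qed

lemma pcompose_of_int: "(of_int z :: 'a::comm_ring_1 poly) \<circ>\<^sub>p q = of_int z"
  by (simp add: of_int_poly)

lemma detL_pcompose:
  "detL I (\<lambda>u w. f u w \<circ>\<^sub>p q) = detL I f \<circ>\<^sub>p q"
  unfolding detL_def by (simp add: pcompose_sum pcompose_mult pcompose_prod pcompose_of_int)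

lemma sum_pconst: "(\<Sum>z\<in>A. [: f z :]) = [: \<Sum>z\<in>A. f z :]"
  by (induct A rule: infinite_finite_induct) auto

lemma sum_chm:
  assumes "finite A"
  shows "(\<Sum>z\<in>A. chm L u z) = (if u \<in> A then [:0, 1:] else 0) + [: - (\<Sum>z\<in>A. L u z) :]"
proof -
  have "(\<Sum>z\<in>A. chm L u z) = (\<Sum>z\<in>A. (if u = z then [:0, 1:] else 0)) + (\<Sum>z\<in>A. [: - L u z :])"
    unfolding chm_def by (simp add: sum.distrib)
  also have "(\<Sum>z\<in>A. (if u = z then [:0, 1:] else 0)) = (if u \<in> A then [:0, 1:] else 0)"
    using assms by simp
  also have "(\<Sum>z\<in>A. [: - L u z :]) = [: - (\<Sum>z\<in>A. L u z) :]"
    by (simp add: sum_pconst sum_negf)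
  finally show ?thesis .
qed

lemma char_poly_matrix_mat:
  "char_poly_matrix (mat k k g) = mat k k (\<lambda>(a, b). chm (\<lambda>i j. g (i, j)) a b)"
  by (intro eq_matI) (auto simp: chm_def char_poly_matrix_def)

lemma core:
  fixes k :: nat and W :: "nat \<Rightarrow> nat set" and L :: "nat \<Rightarrow> nat \<Rightarrow> complex"
    and c :: "nat \<Rightarrow> nat \<Rightarrow> complex" and d :: "nat \<Rightarrow> complex"
  assumes fin: "\<And>i. i < k \<Longrightarrow> finite (W i)" and ne: "\<And>i. i < k \<Longrightarrow> W i \<noteq> {}"
    and disj: "\<And>i j. i < k \<Longrightarrow> j < k \<Longrightarrow> i \<noteq> j \<Longrightarrow> W i \<inter> W j = {}"
    and cross: "\<And>i j u w. i < k \<Longrightarrow> j < k \<Longrightarrow> i \<noteq> j \<Longrightarrow> u \<in> W i \<Longrightarrow> w \<in> W j \<Longrightarrow> L u w = c i j"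
    and rows: "\<And>i u. i < k \<Longrightarrow> u \<in> W i \<Longrightarrow> (\<Sum>z\<in>W i. L u z) = d i"
  shows "detL (\<Union>i<k. W i) (chm L) =
    char_poly (mat k k (\<lambda>(i, j). if i = j then d i else of_nat (card (W j)) * c i j)) *
    (\<Prod>i<k. detL (W i - {Min (W i)}) (chm (\<lambda>u w. L u w - L (Min (W i)) w)))"
proof -
  define V where "V = (\<Union>i<k. W i)"
  define r where "r = (\<lambda>i. Min (W i))"
  define R where "R = r ` {..<k}"
  have finV: "finite V" unfolding V_def using fin by auto
  have rin: "\<And>i. i < k \<Longrightarrow> r i \<in> W i" unfolding r_def using fin ne by auto
  have uniq: "\<And>i j u. i < k \<Longrightarrow> j < k \<Longrightarrow> u \<in> W i \<Longrightarrow> u \<in> W j \<Longrightarrow> i = j"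
    using disj by blast
  have Riff: "\<And>i u. i < k \<Longrightarrow> u \<in> W i \<Longrightarrow> (u \<in> R \<longleftrightarrow> u = r i)"
    unfolding R_def using rin uniq by blast
  have injr: "inj_on r {..<k}" using rin uniq by (intro inj_onI) (metis lessThan_iff)
  have RV: "R \<subseteq> V" unfolding R_def V_def using rin by auto
  have WV: "\<And>i. i < k \<Longrightarrow> W i \<subseteq> V" unfolding V_def by auto
  define Id :: "nat \<Rightarrow> nat \<Rightarrow> complex poly" where "Id = (\<lambda>u w. if u = w then 1 else 0)"
  define N :: "nat \<Rightarrow> nat \<Rightarrow> complex poly" where
    "N = (\<lambda>u w. if u \<notin> R \<and> (\<exists>i<k. u \<in> W i \<and> w = r i) then 1 else 0)"
  define X where "X = chm L"
  define P where "P = (\<lambda>u w. Id u w + N u w)"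
  define Q where "Q = (\<lambda>u w. Id u w - N u w)"
  define XP where "XP = (\<lambda>u w. \<Sum>z\<in>V. X u z * P z w)"
  define Y where "Y = (\<lambda>u w. \<Sum>z\<in>V. Q u z * XP z w)"
  have Nrow: "\<And>i u z. i < k \<Longrightarrow> u \<in> W i \<Longrightarrow> u \<noteq> r i \<Longrightarrow> N u z = (if z = r i then 1 else 0)"
  proof -
    fix i u z assume a: "i < k" "u \<in> W i" "u \<noteq> r i"
    have uR: "u \<notin> R" using Riff[OF a(1,2)] a(3) by simp
    have "(\<exists>i'<k. u \<in> W i' \<and> z = r i') \<longleftrightarrow> z = r i"
      using a(1,2) uniq[of _ i u] by blast
    then show "N u z = (if z = r i then 1 else 0)" unfolding N_def using uR by simp
  qed
  have NrowR: "\<And>u z. u \<in> R \<Longrightarrow> N u z = 0" unfolding N_def by auto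
  have Ncol: "\<And>j z. j < k \<Longrightarrow> z \<in> V \<Longrightarrow> N z (r j) = (if z \<in> W j - {r j} then 1 else 0)"
  proof -
    fix j z assume j: "j < k" and z: "z \<in> V"
    show "N z (r j) = (if z \<in> W j - {r j} then 1 else 0)"
    proof (cases "z \<in> W j - {r j}")
      case True
      then have zR: "z \<notin> R" using Riff[OF j, of z] by simp
      have "\<exists>i<k. z \<in> W i \<and> r j = r i" using True j by blast
      then show ?thesis using True zR unfolding N_def by simp
    next
      case False
      have "\<not> (z \<notin> R \<and> (\<exists>i<k. z \<in> W i \<and> r j = r i))"
      proof
        assume a: "z \<notin> R \<and> (\<exists>i<k. z \<in> W i \<and> r j = r i)"
        then obtain i where i: "i < k" "z \<in> W i" "r j = r i" by blast
        then have "r j \<in> W i" using rin[OF i(1)] by simp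
        then have ij: "i = j" using uniq[OF i(1) j _ rin[OF j]] by simp
        have "z \<noteq> r j" using a by (auto simp: R_def j)
        then show False using False i(2) ij by simp
      qed
      then show ?thesis using False unfolding N_def by simp
    qed
  qed
  have NcolR: "\<And>z w. w \<notin> R \<Longrightarrow> N z w = 0" unfolding N_def R_def by auto
  have delta: "\<And>a g. a \<in> V \<Longrightarrow> (\<Sum>z\<in>V. Id a z * g z) = g a"
  proof -
    fix a g assume a: "a \<in> V"
    have "(\<Sum>z\<in>V. Id a z * g z) = (\<Sum>z\<in>V. if a = z then g z else 0)"
      by (intro sum.cong) (auto simp: Id_def)
    then show "(\<Sum>z\<in>V. Id a z * g z) = g a" using finV a by simp
  qed
  have delta2: "\<And>a g. a \<in> V \<Longrightarrow> (\<Sum>z\<in>V. g z * Id z a) = g a"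
  proof -
    fix a g assume a: "a \<in> V"
    have "(\<Sum>z\<in>V. g z * Id z a) = (\<Sum>z\<in>V. if a = z then g z else 0)"
      by (intro sum.cong) (auto simp: Id_def)
    then show "(\<Sum>z\<in>V. g z * Id z a) = g a" using finV a by simp
  qed
  have deltaN: "\<And>u i g. i < k \<Longrightarrow> u \<in> W i \<Longrightarrow> u \<noteq> r i \<Longrightarrow> (\<Sum>z\<in>V. N u z * g z) = g (r i)"
  proof -
    fix u i g assume a: "i < k" "u \<in> W i" "u \<noteq> r i"
    have "(\<Sum>z\<in>V. N u z * g z) = (\<Sum>z\<in>V. (if r i = z then g z else 0))"
      using Nrow[OF a] by (intro sum.cong) auto
    also have "\<dots> = g (r i)" using finV rin[OF a(1)] WV[OF a(1)] by auto
    finally show "(\<Sum>z\<in>V. N u z * g z) = g (r i)" .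
  qed
  have deltaNc: "\<And>j g. j < k \<Longrightarrow> (\<Sum>z\<in>V. g z * N z (r j)) = (\<Sum>z\<in>W j - {r j}. g z)"
  proof -
    fix j g assume j: "j < k"
    have "(\<Sum>z\<in>V. g z * N z (r j)) = (\<Sum>z\<in>V. (if z \<in> W j - {r j} then g z else 0))"
      using Ncol[OF j] by (intro sum.cong) auto
    also have "\<dots> = sum g (V \<inter> (W j - {r j}))" using finV by (simp add: sum.inter_restrict)
    also have "V \<inter> (W j - {r j}) = W j - {r j}" using WV[OF j] by auto
    finally show "(\<Sum>z\<in>V. g z * N z (r j)) = (\<Sum>z\<in>W j - {r j}. g z)" .
  qed
  have deltaNcR: "\<And>w g. w \<notin> R \<Longrightarrow> (\<Sum>z\<in>V. g z * N z w) = 0"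
    using NcolR by simp
  have XP1: "\<And>u j. j < k \<Longrightarrow> XP u (r j) = (\<Sum>z\<in>W j. X u z)"
  proof -
    fix u j assume j: "j < k"
    have "XP u (r j) = (\<Sum>z\<in>V. X u z * Id z (r j)) + (\<Sum>z\<in>V. X u z * N z (r j))"
      unfolding XP_def P_def by (simp add: distrib_left sum.distrib)
    also have "\<dots> = X u (r j) + (\<Sum>z\<in>W j - {r j}. X u z)"
      using delta2[of "r j"] deltaNc[OF j] rin[OF j] WV[OF j] by auto
    also have "\<dots> = (\<Sum>z\<in>W j. X u z)"
      using fin[OF j] rin[OF j] by (simp add: sum.remove)
    finally show "XP u (r j) = (\<Sum>z\<in>W j. X u z)" .
  qed
  have XP2: "\<And>u w. w \<in> V \<Longrightarrow> w \<notin> R \<Longrightarrow> XP u w = X u w"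
  proof -
    fix u w assume w: "w \<in> V" "w \<notin> R"
    have "XP u w = (\<Sum>z\<in>V. X u z * Id z w) + (\<Sum>z\<in>V. X u z * N z w)"
      unfolding XP_def P_def by (simp add: distrib_left sum.distrib)
    then show "XP u w = X u w" using delta2[OF w(1)] deltaNcR[OF w(2)] by simp
  qed
  have Y1: "\<And>u w. u \<in> R \<Longrightarrow> Y u w = XP u w"
  proof -
    fix u w assume u: "u \<in> R"
    have "Y u w = (\<Sum>z\<in>V. Id u z * XP z w) - (\<Sum>z\<in>V. N u z * XP z w)"
      unfolding Y_def Q_def by (simp add: left_diff_distrib sum_subtractf)
    then show "Y u w = XP u w" using delta[of u] u RV NrowR[OF u] by auto
  qed
  have Y2: "\<And>i u w. i < k \<Longrightarrow> u \<in> W i \<Longrightarrow> u \<noteq> r i \<Longrightarrow> Y u w = XP u w - XP (r i) w"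
  proof -
    fix i u w assume a: "i < k" "u \<in> W i" "u \<noteq> r i"
    have "Y u w = (\<Sum>z\<in>V. Id u z * XP z w) - (\<Sum>z\<in>V. N u z * XP z w)"
      unfolding Y_def Q_def by (simp add: left_diff_distrib sum_subtractf)
    then show "Y u w = XP u w - XP (r i) w" using delta[of u] deltaN[OF a] WV[OF a(1)] a(2) by auto
  qed
  have sX: "\<And>u j. j < k \<Longrightarrow> (\<Sum>z\<in>W j. X u z) = (if u \<in> W j then [:0, 1:] else 0) + [: - (\<Sum>z\<in>W j. L u z) :]"
    unfolding X_def using fin by (simp add: sum_chm)
  have sL: "\<And>i j u. i < k \<Longrightarrow> j < k \<Longrightarrow> u \<in> W i \<Longrightarrow>
      (\<Sum>z\<in>W j. L u z) = (if i = j then d i else of_nat (card (W j)) * c i j)"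
  proof -
    fix i j u assume a: "i < k" "j < k" "u \<in> W i"
    show "(\<Sum>z\<in>W j. L u z) = (if i = j then d i else of_nat (card (W j)) * c i j)"
    proof (cases "i = j")
      case True then show ?thesis using rows a by simp
    next
      case False
      then have "(\<Sum>z\<in>W j. L u z) = (\<Sum>z\<in>W j. c i j)" using cross a by (intro sum.cong) auto
      then show ?thesis using False by simp
    qed
  qed
  have QP: "vm V Q * vm V P = 1\<^sub>m (card V)"
  proof -
    have "vm V Q * vm V P = vm V (\<lambda>u w. \<Sum>z\<in>V. Q u z * P z w)" by (rule vm_mult[OF finV])
    also have "\<dots> = vm V Id"
      unfolding vm_def
    proof (intro cong_mat refl)
      fix a b assume ab: "a < card V" "b < card V"
      let ?u = "sorted_list_of_set V ! a" and ?w = "sorted_list_of_set V ! b"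
      have u: "?u \<in> V" using ab(1) finV by (metis length_sorted_list_of_set nth_mem set_sorted_list_of_set)
      have w: "?w \<in> V" using ab(2) finV by (metis length_sorted_list_of_set nth_mem set_sorted_list_of_set)
      have e: "(\<Sum>z\<in>V. Q ?u z * P z ?w) = (\<Sum>z\<in>V. Id ?u z * P z ?w) - (\<Sum>z\<in>V. N ?u z * P z ?w)"
        unfolding Q_def by (simp add: left_diff_distrib sum_subtractf)
      have "(\<Sum>z\<in>V. Q ?u z * P z ?w) = Id ?u ?w"
      proof (cases "?u \<in> R")
        case True
        then show ?thesis using e delta[OF u] NrowR[OF True] unfolding P_def by simp
      next
        case False
        from u obtain i where i: "i < k" "?u \<in> W i" unfolding V_def by auto
        then have ne: "?u \<noteq> r i" using False Riff[OF i] by auto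
        have rR: "r i \<in> R" unfolding R_def using i by auto
        show ?thesis using e delta[OF u] deltaN[OF i ne] NrowR[OF rR] Nrow[OF i ne]
          unfolding P_def Id_def using ne by auto
      qed
      then show "(case (a, b) of (a, b) \<Rightarrow> \<Sum>z\<in>V. Q (sorted_list_of_set V ! a) z * P z (sorted_list_of_set V ! b)) =
          (case (a, b) of (a, b) \<Rightarrow> Id (sorted_list_of_set V ! a) (sorted_list_of_set V ! b))" by simp
    qed
    also have "\<dots> = 1\<^sub>m (card V)" unfolding Id_def by (rule vm_one[OF finV])
    finally show ?thesis .
  qed
  have detQP: "det (vm V Q) * det (vm V P) = 1"
    using QP det_mult[OF vm_carrier vm_carrier] by (metis det_one)
  have "vm V Q * (vm V X * vm V P) = vm V Y"
    unfolding Y_def XP_def by (simp add: vm_mult[OF finV])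
  then have "det (vm V Y) = det (vm V Q) * (det (vm V X) * det (vm V P))"
    by (metis det_mult mult_carrier_mat vm_carrier)
  then have dXY: "detL V X = detL V Y" using detQP finV det_vm
    by (metis (no_types, lifting) mult.left_commute mult_1_right)
  have Yz: "\<And>u w. u \<in> V - R \<Longrightarrow> w \<in> R \<Longrightarrow> Y u w = 0"
  proof -
    fix u w assume u: "u \<in> V - R" and w: "w \<in> R"
    from u obtain i where i: "i < k" "u \<in> W i" unfolding V_def by auto
    then have ne: "u \<noteq> r i" using u Riff[OF i] by auto
    from w obtain j where j: "j < k" "w = r j" unfolding R_def by auto
    have "u \<in> W j \<longleftrightarrow> i = j" using uniq[OF i(1) j(1) i(2)] i(2) by auto
    moreover have "r i \<in> W j \<longleftrightarrow> i = j" using uniq[OF i(1) j(1) rin[OF i(1)]] rin[OF i(1)] by auto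
    ultimately show "Y u w = 0" using Y2[OF i ne] XP1[OF j(1)] sX[OF j(1)] sL[OF i(1) j(1) i(2)]
      sL[OF i(1) j(1) rin[OF i(1)]] j by simp
  qed
  have "detL V Y = detL R Y * detL (V - R) Y"
    by (rule detL_block[OF finV RV Yz])
  also have "detL R Y = detL {..<k} (\<lambda>a b. Y (r a) (r b))"
    unfolding R_def by (rule detL_reindex[OF _ injr]) simp
  also have "\<dots> = detL {..<k} (\<lambda>a b. chm (\<lambda>i j. if i = j then d i else of_nat (card (W j)) * c i j) a b)"
  proof (rule detL_cong)
    fix a b assume a: "a \<in> {..<k}" and b: "b \<in> {..<k}"
    have rR: "r a \<in> R" unfolding R_def using a by auto
    have "r a \<in> W b \<longleftrightarrow> a = b" using uniq[of a b "r a"] a b rin[of a] by auto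
    then show "Y (r a) (r b) = chm (\<lambda>i j. if i = j then d i else of_nat (card (W j)) * c i j) a b"
      using Y1[OF rR] XP1[of b] sX[of b] sL[of a b "r a"] a b rin[of a]
      by (simp add: chm_def)
  qed
  also have "\<dots> = char_poly (mat k k (\<lambda>(i, j). if i = j then d i else of_nat (card (W j)) * c i j))"
    unfolding char_poly_def char_poly_matrix_mat detL_mat by (simp add: atLeast0LessThan)
  also have "V - R = (\<Union>i<k. W i - {r i})"
  proof
    show "V - R \<subseteq> (\<Union>i<k. W i - {r i})"
    proof
      fix u assume u: "u \<in> V - R"
      then obtain i where i: "i < k" "u \<in> W i" unfolding V_def by auto
      then show "u \<in> (\<Union>i<k. W i - {r i})" using Riff[OF i] u by auto
    qed
    show "(\<Union>i<k. W i - {r i}) \<subseteq> V - R"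
    proof
      fix u assume "u \<in> (\<Union>i<k. W i - {r i})"
      then obtain i where i: "i < k" "u \<in> W i" "u \<noteq> r i" by auto
      then show "u \<in> V - R" using Riff[OF i(1,2)] unfolding V_def by auto
    qed
  qed
  also have "detL (\<Union>i<k. W i - {r i}) Y = (\<Prod>i<k. detL (W i - {r i}) Y)"
  proof (rule detL_blockdiag)
    show "\<And>i. i < k \<Longrightarrow> finite (W i - {r i})" using fin by simp
    show "\<And>i j. i < k \<Longrightarrow> j < k \<Longrightarrow> i \<noteq> j \<Longrightarrow> (W i - {r i}) \<inter> (W j - {r j}) = {}"
      using disj by blast
    fix i j u w assume a: "i < k" "j < k" "i \<noteq> j" "u \<in> W i - {r i}" "w \<in> W j - {r j}"
    have wV: "w \<in> V" "w \<notin> R" using a WV[of j] Riff[of j w] by auto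
    have "u \<noteq> w" "r i \<noteq> w" using a rin[of i] disj[of i j] by auto
    then show "Y u w = 0" using Y2[of i u w] a XP2[OF wV] cross[of i j u w] cross[of i j "r i" w] rin
      unfolding X_def chm_def by auto
  qed
  also have "(\<Prod>i<k. detL (W i - {r i}) Y) = (\<Prod>i<k. detL (W i - {r i}) (chm (\<lambda>u w. L u w - L (r i) w)))"
  proof (rule prod.cong[OF refl], rule detL_cong)
    fix i u w assume a: "i \<in> {..<k}" "u \<in> W i - {r i}" "w \<in> W i - {r i}"
    have wV: "w \<in> V" "w \<notin> R" using a WV[of i] Riff[of i w] by auto
    show "Y u w = chm (\<lambda>u w. L u w - L (r i) w) u w"
      using Y2[of i u w] a XP2[OF wV] unfolding X_def chm_def by auto
  qed
  finally show ?thesis using dXY unfolding V_def X_def r_def by simp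
qed

lemma uniq_blk:
  fixes k :: nat and Gs :: "nat \<Rightarrow> sgraph"
  assumes disj: "\<And>i j. i < k \<Longrightarrow> j < k \<Longrightarrow> i \<noteq> j \<Longrightarrow> sV (Gs i) \<inter> sV (Gs j) = {}"
    and "a < k" "b < k" "u \<in> sV (Gs a)" "u \<in> sV (Gs b)"
  shows "a = b"
  using disj[of a b] assms(2-) by blast

lemma cross_mem:
  fixes k :: nat and Gs :: "nat \<Rightarrow> sgraph"
  assumes disj: "\<And>i j. i < k \<Longrightarrow> j < k \<Longrightarrow> i \<noteq> j \<Longrightarrow> sV (Gs i) \<inter> sV (Gs j) = {}"
    and i: "i < k" and j: "j < k" and u: "u \<in> sV (Gs i)" and w: "w \<in> sV (Gs j)"
  shows "{u, w} \<in> {{u, w} | i j u w. i < k \<and> j < k \<and> {i, j} \<in> S \<and> u \<in> sV (Gs i) \<and> w \<in> sV (Gs j)}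
     \<longleftrightarrow> {i, j} \<in> S"
proof
  assume "{u, w} \<in> {{u, w} | i j u w. i < k \<and> j < k \<and> {i, j} \<in> S \<and> u \<in> sV (Gs i) \<and> w \<in> sV (Gs j)}"
  then obtain i' j' u' w' where e: "{u, w} = {u', w'}" "i' < k" "j' < k" "{i', j'} \<in> S"
    "u' \<in> sV (Gs i')" "w' \<in> sV (Gs j')" by blast
  from e(1) have "(u = u' \<and> w = w') \<or> (u = w' \<and> w = u')" by (simp add: doubleton_eq_iff)
  then show "{i, j} \<in> S"
  proof
    assume a: "u = u' \<and> w = w'"
    then have "i = i'" "j = j'" using uniq_blk[where k=k and Gs=Gs, OF disj] i j u w e by metis+
    then show ?thesis using e by simp
  next
    assume a: "u = w' \<and> w = u'"
    then have "i = j'" "j = i'" using uniq_blk[where k=k and Gs=Gs, OF disj] i j u w e by metis+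
    then show ?thesis using e by (simp add: insert_commute)
  qed
next
  assume "{i, j} \<in> S"
  then show "{u, w} \<in> {{u, w} | i j u w. i < k \<and> j < k \<and> {i, j} \<in> S \<and> u \<in> sV (Gs i) \<and> w \<in> sV (Gs j)}"
    using i j u w by blast
qed

lemma inner_mem:
  fixes k :: nat and Gs :: "nat \<Rightarrow> sgraph"
  assumes disj: "\<And>i j. i < k \<Longrightarrow> j < k \<Longrightarrow> i \<noteq> j \<Longrightarrow> sV (Gs i) \<inter> sV (Gs j) = {}"
    and T: "\<And>i e. i < k \<Longrightarrow> e \<in> T i \<Longrightarrow> e \<subseteq> sV (Gs i)"
    and i: "i < k" and j: "j < k" and u: "u \<in> sV (Gs i)" and w: "w \<in> sV (Gs j)"
  shows "{u, w} \<in> (\<Union>i<k. T i) \<longleftrightarrow> (i = j \<and> {u, w} \<in> T i)"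
proof
  assume "{u, w} \<in> (\<Union>i<k. T i)"
  then obtain i' where i': "i' < k" "{u, w} \<in> T i'" by blast
  then have "u \<in> sV (Gs i')" "w \<in> sV (Gs i')" using T by auto
  then have "i = i'" "j = i'" using uniq_blk[where k=k and Gs=Gs, OF disj] i j u w i' by metis+
  then show "i = j \<and> {u, w} \<in> T i" using i' by simp
next
  assume "i = j \<and> {u, w} \<in> T i"
  then show "{u, w} \<in> (\<Union>i<k. T i)" using i by blast
qed

lemma wf_edge_sub: "wf_sgraph H \<Longrightarrow> e \<in> sE H \<Longrightarrow> e \<subseteq> sV H"
  unfolding wf_sgraph_def by blast

lemma wf_sig_sub: "wf_sgraph H \<Longrightarrow> e \<in> sSig H \<Longrightarrow> e \<subseteq> sV H"
  unfolding wf_sgraph_def by blast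

lemma wf_no_loop: "wf_sgraph H \<Longrightarrow> {i, i} \<notin> sE H"
  unfolding wf_sgraph_def by (auto simp: doubleton_eq_iff)

lemma wf_no_loop_sig: "wf_sgraph H \<Longrightarrow> {i, i} \<notin> sSig H"
  unfolding wf_sgraph_def by (auto simp: doubleton_eq_iff)

lemma sadj_subst:
  fixes k :: nat and Gs :: "nat \<Rightarrow> sgraph"
  assumes wfG': "wf_sgraph G'"
    and wf: "\<And>i. i < k \<Longrightarrow> wf_sgraph (Gs i)"
    and disj: "\<And>i j. i < k \<Longrightarrow> j < k \<Longrightarrow> i \<noteq> j \<Longrightarrow> sV (Gs i) \<inter> sV (Gs j) = {}"
    and i: "i < k" and j: "j < k" and u: "u \<in> sV (Gs i)" and w: "w \<in> sV (Gs j)"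
  shows "sadj (subst_all G' k Gs) u w = (if i = j then sadj (Gs i) u w else sadj G' i j)"
proof -
  have E: "{u, w} \<in> sE (subst_all G' k Gs) \<longleftrightarrow> (i = j \<and> {u, w} \<in> sE (Gs i)) \<or> {i, j} \<in> sE G'"
    unfolding subst_all_def using inner_mem[where k=k and Gs=Gs and T="\<lambda>i. sE (Gs i)", OF disj] cross_mem[where k=k and Gs=Gs, OF disj i j u w]
      wf_edge_sub[OF wf] i j u w by simp
  have S: "{u, w} \<in> sSig (subst_all G' k Gs) \<longleftrightarrow> (i = j \<and> {u, w} \<in> sSig (Gs i)) \<or> {i, j} \<in> sSig G'"
    unfolding subst_all_def using inner_mem[where k=k and Gs=Gs and T="\<lambda>i. sSig (Gs i)", OF disj] cross_mem[where k=k and Gs=Gs, OF disj i j u w]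
      wf_sig_sub[OF wf] i j u w by simp
  show ?thesis
  proof (cases "i = j")
    case True
    then show ?thesis using E S wf_no_loop[OF wfG'] wf_no_loop_sig[OF wfG'] by (simp add: sadj_def)
  next
    case False
    then show ?thesis using E S by (simp add: sadj_def)
  qed
qed

lemma sdeg_subst:
  fixes k :: nat and Gs :: "nat \<Rightarrow> sgraph"
  assumes wfG': "wf_sgraph G'"
    and wf: "\<And>i. i < k \<Longrightarrow> wf_sgraph (Gs i)"
    and disj: "\<And>i j. i < k \<Longrightarrow> j < k \<Longrightarrow> i \<noteq> j \<Longrightarrow> sV (Gs i) \<inter> sV (Gs j) = {}"
    and i: "i < k" and u: "u \<in> sV (Gs i)"
  shows "sdeg (subst_all G' k Gs) u = sdeg (Gs i) u + nbsize G' k Gs i"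
proof -
  define Nb where "Nb = {j. j < k \<and> {i, j} \<in> sE G'}"
  have finNb: "finite Nb" unfolding Nb_def by simp
  have fin: "\<And>j. j < k \<Longrightarrow> finite (sV (Gs j))" using wf unfolding wf_sgraph_def by simp
  have finE: "finite (sE (Gs i))"
  proof -
    have "sE (Gs i) \<subseteq> Pow (sV (Gs i))" using wf_edge_sub[OF wf[OF i]] by auto
    then show ?thesis using fin[OF i] finite_subset by blast
  qed
  have iNb: "i \<notin> Nb" unfolding Nb_def using wf_no_loop[OF wfG'] by auto
  have eq: "{e \<in> sE (subst_all G' k Gs). u \<in> e} =
      {e \<in> sE (Gs i). u \<in> e} \<union> (\<Union>j\<in>Nb. (\<lambda>w. {u, w}) ` sV (Gs j))"
  proof (intro equalityI subsetI)
    fix e assume "e \<in> {e \<in> sE (subst_all G' k Gs). u \<in> e}"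
    then have e: "e \<in> sE (subst_all G' k Gs)" "u \<in> e" by auto
    then consider (a) i' where "i' < k" "e \<in> sE (Gs i')"
      | (b) i' j' u' w' where "e = {u', w'}" "i' < k" "j' < k" "{i', j'} \<in> sE G'"
          "u' \<in> sV (Gs i')" "w' \<in> sV (Gs j')"
      unfolding subst_all_def by auto
    then show "e \<in> {e \<in> sE (Gs i). u \<in> e} \<union> (\<Union>j\<in>Nb. (\<lambda>w. {u, w}) ` sV (Gs j))"
    proof cases
      case a
      then have "u \<in> sV (Gs i')" using wf_edge_sub[OF wf] e by blast
      then have "i' = i" using uniq_blk[where k=k and Gs=Gs, OF disj] a i u by metis
      then show ?thesis using a e by auto
    next
      case b
      then have "u = u' \<or> u = w'" using e by auto
      then show ?thesis
      proof
        assume "u = u'"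
        then have "i' = i" using uniq_blk[where k=k and Gs=Gs, OF disj] b i u by metis
        then have "j' \<in> Nb" using b unfolding Nb_def by auto
        then show ?thesis using b \<open>u = u'\<close> by auto
      next
        assume "u = w'"
        then have "j' = i" using uniq_blk[where k=k and Gs=Gs, OF disj] b i u by metis
        then have "i' \<in> Nb" using b unfolding Nb_def by (auto simp: insert_commute)
        then show ?thesis using b \<open>u = w'\<close> by (auto simp: insert_commute)
      qed
    qed
  next
    fix e assume "e \<in> {e \<in> sE (Gs i). u \<in> e} \<union> (\<Union>j\<in>Nb. (\<lambda>w. {u, w}) ` sV (Gs j))"
    then show "e \<in> {e \<in> sE (subst_all G' k Gs). u \<in> e}"
    proof
      assume "e \<in> {e \<in> sE (Gs i). u \<in> e}"
      then show ?thesis using i unfolding subst_all_def by auto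
    next
      assume "e \<in> (\<Union>j\<in>Nb. (\<lambda>w. {u, w}) ` sV (Gs j))"
      then obtain j w where "j \<in> Nb" "w \<in> sV (Gs j)" "e = {u, w}" by auto
      then have "e \<in> sE (subst_all G' k Gs)" using i u unfolding subst_all_def Nb_def by auto
      then show ?thesis using \<open>e = {u, w}\<close> by simp
    qed
  qed
  have d1: "{e \<in> sE (Gs i). u \<in> e} \<inter> (\<Union>j\<in>Nb. (\<lambda>w. {u, w}) ` sV (Gs j)) = {}"
  proof -
    {
      fix j w assume j: "j \<in> Nb" and w: "w \<in> sV (Gs j)" and e: "{u, w} \<in> sE (Gs i)"
      have jk: "j < k" and ji: "j \<noteq> i" using j iNb unfolding Nb_def by auto
      have "w \<in> sV (Gs i)" using wf_edge_sub[OF wf[OF i] e] by auto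
      then have False using uniq_blk[where k=k and Gs=Gs, OF disj jk i w] ji by simp
    }
    then show ?thesis by blast
  qed
  have card_inner: "card {e \<in> sE (Gs i). u \<in> e} = sdeg (Gs i) u" unfolding sdeg_def ..
  have card_outer: "card (\<Union>j\<in>Nb. (\<lambda>w. {u, w}) ` sV (Gs j)) = (\<Sum>j\<in>Nb. card (sV (Gs j)))"
  proof -
    have "card (\<Union>j\<in>Nb. (\<lambda>w. {u, w}) ` sV (Gs j)) = (\<Sum>j\<in>Nb. card ((\<lambda>w. {u, w}) ` sV (Gs j)))"
    proof (rule card_UN_disjoint[OF finNb])
      show "\<forall>j\<in>Nb. finite ((\<lambda>w. {u, w}) ` sV (Gs j))" using fin unfolding Nb_def by auto
      show "\<forall>j\<in>Nb. \<forall>j'\<in>Nb. j \<noteq> j' \<longrightarrow> (\<lambda>w. {u, w}) ` sV (Gs j) \<inter> (\<lambda>w. {u, w}) ` sV (Gs j') = {}"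
      proof (intro ballI impI)
        fix j j' assume a: "j \<in> Nb" "j' \<in> Nb" "j \<noteq> j'"
        {
          fix w w' assume w: "w \<in> sV (Gs j)" "w' \<in> sV (Gs j')" "{u, w} = {u, w'}"
          then have "w = w'" by (auto simp: doubleton_eq_iff)
          then have False using uniq_blk[where k=k and Gs=Gs and a=j and b=j' and u=w, OF disj] a w unfolding Nb_def by auto
        }
        then show "(\<lambda>w. {u, w}) ` sV (Gs j) \<inter> (\<lambda>w. {u, w}) ` sV (Gs j') = {}" by blast
      qed
    qed
    also have "\<dots> = (\<Sum>j\<in>Nb. card (sV (Gs j)))"
    proof (rule sum.cong[OF refl])
      fix j assume "j \<in> Nb"
      have "inj_on (\<lambda>w. {u, w}) (sV (Gs j))" by (intro inj_onI) (auto simp: doubleton_eq_iff)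
      then show "card ((\<lambda>w. {u, w}) ` sV (Gs j)) = card (sV (Gs j))" by (rule card_image)
    qed
    finally show ?thesis .
  qed
  have "sdeg (subst_all G' k Gs) u = card {e \<in> sE (subst_all G' k Gs). u \<in> e}" unfolding sdeg_def ..
  also have "\<dots> = card {e \<in> sE (Gs i). u \<in> e} + card (\<Union>j\<in>Nb. (\<lambda>w. {u, w}) ` sV (Gs j))"
    unfolding eq by (rule card_Un_disjoint) (use finE finNb fin d1 in \<open>auto simp: Nb_def\<close>)
  finally show ?thesis using card_inner card_outer unfolding nbsize_def Nb_def by simp
qed

definition lap :: "sgraph \<Rightarrow> nat \<Rightarrow> nat \<Rightarrow> complex" where
  "lap H u w = complex_of_real ((if u = w then real (sdeg H u) else 0) - sadj H u w)"

lemma slap_vm: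
  assumes "finite (sV H)"
  shows "map_mat complex_of_real (slap H) = vm (sV H) (lap H)"
  using assms
  by (intro eq_matI) (auto simp: slap_def vlist_def vm_def lap_def nth_eq_iff_index_eq)

lemma spec_lap:
  assumes "finite (sV H)"
  shows "spec (slap H) = proots (detL (sV H) (chm (lap H)))"
  unfolding spec_def slap_vm[OF assms] char_poly_vm[OF assms] ..

lemma eig_rows:
  assumes fin: "finite (sV H)"
    and ev: "map_mat complex_of_real (slap H) *\<^sub>v vec (card (sV H)) (\<lambda>_. 1) = lam \<cdot>\<^sub>v vec (card (sV H)) (\<lambda>_. 1)"
    and u: "u \<in> sV H"
  shows "(\<Sum>z\<in>sV H. lap H u z) = lam"
proof -
  let ?xs = "sorted_list_of_set (sV H)"
  have b: "bij_betw ((!) ?xs) {0..<card (sV H)} (sV H)"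
    using fin by (intro bij_betw_nth) auto
  from u fin obtain a where a: "a < card (sV H)" "?xs ! a = u"
    by (metis in_set_conv_nth length_sorted_list_of_set set_sorted_list_of_set)
  have "(vm (sV H) (lap H) *\<^sub>v vec (card (sV H)) (\<lambda>_. 1)) $ a = (lam \<cdot>\<^sub>v vec (card (sV H)) (\<lambda>_. 1)) $ a"
    using ev slap_vm[OF fin] by simp
  then have "(\<Sum>b\<in>{0..<card (sV H)}. lap H u (?xs ! b)) = lam"
    using a by (simp add: vm_def scalar_prod_def)
  moreover have "(\<Sum>b\<in>{0..<card (sV H)}. lap H u (?xs ! b)) = (\<Sum>z\<in>sV H. lap H u z)"
    by (rule sum.reindex_bij_betw[OF b])
  ultimately show ?thesis by simp
qed

lemma char_poly_1:
  "char_poly (mat 1 1 (\<lambda>(i, j). if i = j then d i else x i j)) = [:- d 0, 1:]"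
  unfolding char_poly_def char_poly_matrix_mat detL_mat
  by (simp add: detL_def chm_def)

lemma lin_nz: "(\<Prod>a\<leftarrow>as. [:- a, 1:]) \<noteq> (0 :: complex poly)"
  by (auto simp: prod_list_zero_iff)

lemma proots_lin: "proots (\<Prod>a\<leftarrow>as. [:- a, 1:]) = mset (as :: complex list)"
proof (induct as)
  case Nil
  then show ?case by simp
next
  case (Cons a as)
  have e: "(\<Prod>x\<leftarrow>a # as. [:- x, 1:]) = [:- a, 1:] * (\<Prod>x\<leftarrow>as. [:- x, 1:])" by simp
  have "proots ([:- a, 1:] * (\<Prod>x\<leftarrow>as. [:- x, 1:])) = proots [:- a, 1:] + proots (\<Prod>x\<leftarrow>as. [:- x, 1:])"
    by (rule proots_mult) (auto simp: lin_nz)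
  then show ?case unfolding e using Cons by simp
qed

lemma shift_lin: "(\<Prod>a\<leftarrow>as. [:- a, 1:]) \<circ>\<^sub>p [:- m, 1:] = (\<Prod>a\<leftarrow>as. [:- (a + m), 1:])"
  for as :: "complex list"
proof (induct as)
  case Nil
  then show ?case by (simp add: pcompose_1)
next
  case (Cons a as)
  have e: "(\<Prod>x\<leftarrow>a # as. [:- x, 1:]) = [:- a, 1:] * (\<Prod>x\<leftarrow>as. [:- x, 1:])" by simp
  have e2: "(\<Prod>x\<leftarrow>a # as. [:- (x + m), 1:]) = [:- (a + m), 1:] * (\<Prod>x\<leftarrow>as. [:- (x + m), 1:])" by simp
  have l: "[:- a, 1:] \<circ>\<^sub>p [:- m, 1:] = [:- (a + m), 1:]" by (simp add: pcompose_pCons)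
  show ?case unfolding e e2 pcompose_mult l Cons ..
qed

theorem lemma3p6:
  fixes G' :: sgraph and k :: nat and Gs :: "nat \<Rightarrow> sgraph"
    and ls :: "nat \<Rightarrow> complex list"
  assumes "wf_sgraph G'" and "sV G' = {0..<k}"
    and "\<And>i. i < k \<Longrightarrow> wf_sgraph (Gs i)"
    and "\<And>i. i < k \<Longrightarrow> sV (Gs i) \<noteq> {}"
    and "\<And>i j. i < k \<Longrightarrow> j < k \<Longrightarrow> i \<noteq> j \<Longrightarrow> sV (Gs i) \<inter> sV (Gs j) = {}"
    and "\<And>i. i < k \<Longrightarrow> length (ls i) = card (sV (Gs i))"
    and "\<And>i. i < k \<Longrightarrow> mset (ls i) = spec (slap (Gs i))"
    and "\<And>i. i < k \<Longrightarrow>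
           map_mat complex_of_real (slap (Gs i)) *\<^sub>v (vec (card (sV (Gs i))) (\<lambda>_. 1))
             = last (ls i) \<cdot>\<^sub>v (vec (card (sV (Gs i))) (\<lambda>_. 1))"
  shows "spec (slap (subst_all G' k Gs)) =
           cspec (quotM G' k Gs (\<lambda>i. last (ls i)))
           + (\<Sum>i<k. mset (map (\<lambda>x. x + of_nat (nbsize G' k Gs i)) (butlast (ls i))))"
proof -
  note wfG' = assms(1) and wf = assms(3) and ne = assms(4) and disj = assms(5)
    and len = assms(6) and sp = assms(7) and ev = assms(8)
  define W where "W = (\<lambda>i. sV (Gs i))"
  define G where "G = subst_all G' k Gs"
  define m :: "nat \<Rightarrow> complex" where "m = (\<lambda>i. of_nat (nbsize G' k Gs i))"
  define lam where "lam = (\<lambda>i. last (ls i))"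
  define r where "r = (\<lambda>i. Min (W i))"
  have finW: "\<And>i. i < k \<Longrightarrow> finite (W i)" using wf unfolding W_def wf_sgraph_def by simp
  have neW: "\<And>i. i < k \<Longrightarrow> W i \<noteq> {}" using ne unfolding W_def by simp
  have disjW: "\<And>i j. i < k \<Longrightarrow> j < k \<Longrightarrow> i \<noteq> j \<Longrightarrow> W i \<inter> W j = {}" using disj unfolding W_def by simp
  have VG: "sV G = (\<Union>i<k. W i)" unfolding G_def W_def subst_all_def by simp
  have finG: "finite (sV G)" unfolding VG using finW by auto
  have lapG: "\<And>i j u w. i < k \<Longrightarrow> j < k \<Longrightarrow> u \<in> W i \<Longrightarrow> w \<in> W j \<Longrightarrow>
      lap G u w = (if i = j then lap (Gs i) u w + (if u = w then m i else 0)
                   else - complex_of_real (sadj G' i j))"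
  proof -
    fix i j u w assume a: "i < k" "j < k" "u \<in> W i" "w \<in> W j"
    have sa: "sadj G u w = (if i = j then sadj (Gs i) u w else sadj G' i j)"
      unfolding G_def by (rule sadj_subst[OF wfG' wf disj a(1,2)]) (use a in \<open>auto simp: W_def\<close>)
    have sd: "sdeg G u = sdeg (Gs i) u + nbsize G' k Gs i"
      unfolding G_def by (rule sdeg_subst[OF wfG' wf disj a(1)]) (use a in \<open>auto simp: W_def\<close>)
    show "lap G u w = (if i = j then lap (Gs i) u w + (if u = w then m i else 0)
                   else - complex_of_real (sadj G' i j))"
    proof (cases "i = j")
      case True
      have sd': "complex_of_real (real (sdeg G u)) = complex_of_real (real (sdeg (Gs i) u)) + m i"
        using sd unfolding m_def by simp
      show ?thesis using sa sd' True by (cases "u = w") (simp_all add: lap_def)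
    next
      case False
      then have "u \<noteq> w" using a disjW by blast
      then show ?thesis using sa False unfolding lap_def by simp
    qed
  qed
  have rowsGi: "\<And>i u. i < k \<Longrightarrow> u \<in> W i \<Longrightarrow> (\<Sum>z\<in>W i. lap (Gs i) u z) = lam i"
    unfolding W_def lam_def using eig_rows finW ev unfolding W_def by blast
  have rowsG: "\<And>i u. i < k \<Longrightarrow> u \<in> W i \<Longrightarrow> (\<Sum>z\<in>W i. lap G u z) = lam i + m i"
  proof -
    fix i u assume a: "i < k" "u \<in> W i"
    have "(\<Sum>z\<in>W i. lap G u z) = (\<Sum>z\<in>W i. lap (Gs i) u z + (if u = z then m i else 0))"
      using lapG[OF a(1) a(1) a(2)] by (intro sum.cong) auto
    also have "\<dots> = lam i + m i" using rowsGi[OF a] finW[OF a(1)] a(2) by (simp add: sum.distrib)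
    finally show "(\<Sum>z\<in>W i. lap G u z) = lam i + m i" .
  qed
  have coreG: "detL (\<Union>i<k. W i) (chm (lap G)) =
    char_poly (mat k k (\<lambda>(i, j). if i = j then lam i + m i else of_nat (card (W j)) * (- complex_of_real (sadj G' i j)))) *
    (\<Prod>i<k. detL (W i - {Min (W i)}) (chm (\<lambda>u w. lap G u w - lap G (Min (W i)) w)))"
    by (rule core[OF finW neW disjW _ rowsG]) (use lapG in auto)
  have Mq: "mat k k (\<lambda>(i, j). if i = j then lam i + m i else of_nat (card (W j)) * (- complex_of_real (sadj G' i j)))
      = quotM G' k Gs lam"
    unfolding quotM_def
  proof (intro cong_mat refl)
    fix i j assume "i < k" "j < k"
    have "{i, j} \<in> sSig G' \<Longrightarrow> {i, j} \<in> sE G'" using wfG' unfolding wf_sgraph_def by blast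
    then show "(case (i, j) of (i, j) \<Rightarrow> if i = j then lam i + m i else of_nat (card (W j)) * (- complex_of_real (sadj G' i j))) =
      (case (i, j) of (i, j) \<Rightarrow> if i = j then lam i + of_nat (nbsize G' k Gs i)
          else if {i, j} \<in> sSig G' then of_nat (card (sV (Gs j)))
          else if {i, j} \<in> sE G' then - of_nat (card (sV (Gs j))) else 0)"
      unfolding m_def W_def sadj_def by auto
  qed
  define D where "D = (\<lambda>i. detL (W i - {r i}) (chm (\<lambda>u w. lap (Gs i) u w - lap (Gs i) (r i) w)))"
  define E where "E = (\<lambda>i. detL (W i - {r i}) (chm (\<lambda>u w. lap G u w - lap G (r i) w)))"
  have coreGi: "\<And>i. i < k \<Longrightarrow> detL (W i) (chm (lap (Gs i))) = [:- lam i, 1:] * D i"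
  proof -
    fix i assume i: "i < k"
    have "detL (\<Union>i'::nat<1. W i) (chm (lap (Gs i))) =
      char_poly (mat 1 1 (\<lambda>(i', j). if i' = j then lam i else of_nat (card (W i)) * 0)) *
      (\<Prod>i'::nat<1. detL (W i - {Min (W i)}) (chm (\<lambda>u w. lap (Gs i) u w - lap (Gs i) (Min (W i)) w)))"
    proof (rule core[where k=1 and W="\<lambda>_. W i" and L="lap (Gs i)" and c="\<lambda>_ _. 0" and d="\<lambda>_. lam i"])
      show "\<And>i'. i' < 1 \<Longrightarrow> finite (W i)" using finW[OF i] .
      show "\<And>i'. i' < 1 \<Longrightarrow> W i \<noteq> {}" using neW[OF i] .
      show "\<And>i' j::nat. i' < 1 \<Longrightarrow> j < 1 \<Longrightarrow> i' \<noteq> j \<Longrightarrow> W i \<inter> W i = {}" by auto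
      show "\<And>(i'::nat) (j::nat) u w. i' < 1 \<Longrightarrow> j < 1 \<Longrightarrow> i' \<noteq> j \<Longrightarrow> u \<in> W i \<Longrightarrow> w \<in> W i \<Longrightarrow> lap (Gs i) u w = 0" by auto
      show "\<And>i' u. i' < 1 \<Longrightarrow> u \<in> W i \<Longrightarrow> (\<Sum>z\<in>W i. lap (Gs i) u z) = lam i" using rowsGi[OF i] .
    qed
    moreover have "(\<Union>i'::nat<1. W i) = W i" by auto
    moreover have "(\<Prod>i'::nat<1. D i) = D i" by simp
    ultimately show "detL (W i) (chm (lap (Gs i))) = [:- lam i, 1:] * D i"
      unfolding D_def r_def char_poly_1 by metis
  qed
  have ED: "\<And>i. i < k \<Longrightarrow> E i = D i \<circ>\<^sub>p [:- m i, 1:]"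
  proof -
    fix i assume i: "i < k"
    have ri: "r i \<in> W i" unfolding r_def using finW[OF i] neW[OF i] by simp
    have "E i = detL (W i - {r i}) (\<lambda>u w. chm (\<lambda>u w. lap (Gs i) u w - lap (Gs i) (r i) w) u w \<circ>\<^sub>p [:- m i, 1:])"
      unfolding E_def
    proof (rule detL_cong)
      fix u w assume u: "u \<in> W i - {r i}" and w: "w \<in> W i - {r i}"
      have "lap G u w - lap G (r i) w = lap (Gs i) u w - lap (Gs i) (r i) w + (if u = w then m i else 0)"
        using lapG[OF i i _ _, of u w] lapG[OF i i ri, of w] u w by auto
      then show "chm (\<lambda>u w. lap G u w - lap G (r i) w) u w =
          chm (\<lambda>u w. lap (Gs i) u w - lap (Gs i) (r i) w) u w \<circ>\<^sub>p [:- m i, 1:]"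
        unfolding chm_def by (auto simp: pcompose_add pcompose_pCons)
    qed
    then show "E i = D i \<circ>\<^sub>p [:- m i, 1:]" unfolding D_def detL_pcompose .
  qed
  have "\<forall>i\<in>{..<k}. \<exists>as. D i = (\<Prod>a\<leftarrow>as. [:- a, 1:])"
  proof
    fix i assume i: "i \<in> {..<k}"
    have "D i = char_poly (vm (W i - {r i}) (\<lambda>u w. lap (Gs i) u w - lap (Gs i) (r i) w))"
      unfolding D_def using finW i by (simp add: char_poly_vm)
    then show "\<exists>as. D i = (\<Prod>a\<leftarrow>as. [:- a, 1:])" using char_poly_factorized[OF vm_carrier] by metis
  qed
  then obtain AS where AS: "\<And>i. i < k \<Longrightarrow> D i = (\<Prod>a\<leftarrow>AS i. [:- a, 1:])" by (metis lessThan_iff)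
  have butl: "\<And>i. i < k \<Longrightarrow> mset (butlast (ls i)) = mset (AS i)"
  proof -
    fix i assume i: "i < k"
    have "ls i \<noteq> []" using len[OF i] finW[OF i] neW[OF i] unfolding W_def by auto
    then have lsd: "ls i = butlast (ls i) @ [lam i]" unfolding lam_def by simp
    have "mset (ls i) = proots (detL (W i) (chm (lap (Gs i))))"
      using sp[OF i] spec_lap finW[OF i] unfolding W_def by simp
    also have "\<dots> = proots ([:- lam i, 1:] * D i)" using coreGi[OF i] by simp
    also have "\<dots> = proots [:- lam i, 1:] + proots (D i)"
      by (rule proots_mult) (auto simp: AS[OF i] lin_nz)
    also have "\<dots> = {#lam i#} + mset (AS i)" using AS[OF i] proots_lin by simp
    finally have "mset (butlast (ls i)) + {#lam i#} = {#lam i#} + mset (AS i)"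
      using lsd by (metis mset_append mset_single_iff_right)
    then show "mset (butlast (ls i)) = mset (AS i)" by (simp add: add.commute)
  qed
  have Eroots: "\<And>i. i < k \<Longrightarrow> proots (E i) = mset (map (\<lambda>x. x + m i) (butlast (ls i)))"
  proof -
    fix i assume i: "i < k"
    have "proots (E i) = proots (\<Prod>a\<leftarrow>map (\<lambda>a. a + m i) (AS i). [:- a, 1:])"
      unfolding ED[OF i] AS[OF i] shift_lin by (simp add: comp_def)
    also have "\<dots> = mset (map (\<lambda>a. a + m i) (AS i))" by (rule proots_lin)
    also have "\<dots> = image_mset (\<lambda>a. a + m i) (mset (AS i))" by simp
    also have "\<dots> = mset (map (\<lambda>x. x + m i) (butlast (ls i)))" using butl[OF i] by simp
    finally show "proots (E i) = mset (map (\<lambda>x. x + m i) (butlast (ls i)))" .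
  qed
  have Enz: "\<And>i. i < k \<Longrightarrow> E i \<noteq> 0"
  proof -
    fix i assume i: "i < k"
    have "E i = (\<Prod>a\<leftarrow>AS i. [:- (a + m i), 1:])" unfolding ED[OF i] AS[OF i] shift_lin ..
    then show "E i \<noteq> 0" by (auto simp: prod_list_zero_iff)
  qed
  have cpnz: "char_poly (quotM G' k Gs lam) \<noteq> 0"
  proof -
    have "quotM G' k Gs lam \<in> carrier_mat k k" unfolding quotM_def by simp
    from degree_monic_char_poly[OF this] show ?thesis by auto
  qed
  have "spec (slap G) = proots (detL (sV G) (chm (lap G)))" by (rule spec_lap[OF finG])
  also have "\<dots> = proots (char_poly (quotM G' k Gs lam) * (\<Prod>i<k. E i))"
    unfolding VG coreG Mq E_def r_def ..
  also have "\<dots> = proots (char_poly (quotM G' k Gs lam)) + proots (\<Prod>i<k. E i)"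
    by (rule proots_mult[OF cpnz]) (use Enz in auto)
  also have "proots (\<Prod>i<k. E i) = (\<Sum>i<k. proots (E i))"
    by (rule proots_prod) (use Enz in auto)
  also have "\<dots> = (\<Sum>i<k. mset (map (\<lambda>x. x + m i) (butlast (ls i))))"
    by (rule sum.cong) (auto simp: Eroots)
  finally show ?thesis unfolding G_def m_def lam_def cspec_def .
qed

end
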